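(* Let $d_1,\dots,d_r\ge1$, $n_j=d_j+1$, and let $k_1,\dots,k_r$ be nonnegative integers with $\sum_jk_j=\sum_jd_j$. Let $K=\mathbb C(u_1,\dots,u_r)$, $L=K(z_1,\dots,z_r)$ with $z_j^{n_j}=u_j$, and $\mathrm{tr}_{L/K}(g)=\sum g(z_1,\dots,z_r)$ over all solutions of $z_j^{n_j}=u_j$ ($1\le j\le r$). Put $$T_k(u)=\mathrm{tr}_{L/K}\left(\frac1{z_1^{d_1-k_1}\cdots z_r^{d_r-k_r}(1-z_1-\dots-z_r)}\right)\in K.$$ Then $T_k$ is regular at $u=0$ and its power series expansion there is $$T_k(u)=n_1\cdots n_r\sum_{b_1,\dots,b_r\ge0}\frac{(n_1b_1+\dots+n_rb_r)!}{(n_1b_1+d_1-k_1)!\cdots(n_rb_r+d_r-k_r)!}\,u_1^{b_1}\cdots u_r^{b_r},$$ with the convention $1/m!=0$ for negative integers $m$. *)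

theory Defs
  imports "HOL-Analysis.Analysis"
begin

text \<open>Points z = (z_1,...,z_r) are modelled as functions nat => complex vanishing
  outside {0..<r} (index j corresponds to the paper's j+1).\<close>

definition root_tuples :: "nat \<Rightarrow> (nat \<Rightarrow> nat) \<Rightarrow> (nat \<Rightarrow> complex) \<Rightarrow> (nat \<Rightarrow> complex) set" where
  "root_tuples r n u = {z. (\<forall>j<r. z j ^ n j = u j) \<and> (\<forall>j. r \<le> j \<longrightarrow> z j = 0)}"

definition trace_T :: "nat \<Rightarrow> (nat \<Rightarrow> nat) \<Rightarrow> (nat \<Rightarrow> nat) \<Rightarrow> (nat \<Rightarrow> complex) \<Rightarrow> complex" where
  "trace_T r d k u =
     (\<Sum>z\<in>root_tuples r (\<lambda>j. d j + 1) u.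
        1 / ((\<Prod>j<r. z j powi (int (d j) - int (k j))) * (1 - (\<Sum>j<r. z j))))"

definition inv_fact :: "int \<Rightarrow> complex" where
  "inv_fact m = (if m < 0 then 0 else 1 / of_nat (fact (nat m)))"

definition multi_indices :: "nat \<Rightarrow> (nat \<Rightarrow> nat) set" where
  "multi_indices r = {b. \<forall>j. r \<le> j \<longrightarrow> b j = 0}"

end

theory Submission
  imports Defs
begin


definition FI :: "nat \<Rightarrow> nat \<Rightarrow> (nat \<Rightarrow> nat) set" where
  "FI r m = {a \<in> multi_indices r. (\<Sum>j<r. a j) = m}"

lemma FI_0: "FI 0 m = (if m = 0 then {\<lambda>_. 0} else {})"
  by (auto simp: FI_def multi_indices_def)

lemma FI_Suc: "FI (Suc r) m = (\<lambda>(i,a). a(r:=i)) ` (SIGMA i:{..m}. FI r (m-i))"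
proof (intro equalityI subsetI)
  fix b assume b: "b \<in> FI (Suc r) m"
  have "b = (b(r:=0))(r := b r)" by simp
  moreover have "(b r, b(r:=0)) \<in> (SIGMA i:{..m}. FI r (m-i))"
    using b by (auto simp: FI_def multi_indices_def)
  ultimately show "b \<in> (\<lambda>(i,a). a(r:=i)) ` (SIGMA i:{..m}. FI r (m-i))"
    by (metis (no_types, lifting) case_prod_conv image_eqI)
next
  fix b assume "b \<in> (\<lambda>(i,a). a(r:=i)) ` (SIGMA i:{..m}. FI r (m-i))"
  then obtain i a where b: "b = a(r:=i)" "i \<le> m" "a \<in> FI r (m-i)" by auto
  have "(\<Sum>j<r. b j) = (\<Sum>j<r. a j)" by (intro sum.cong) (auto simp: b)
  then show "b \<in> FI (Suc r) m" using b by (auto simp: FI_def multi_indices_def)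
qed

lemma FI_inj: "inj_on (\<lambda>(i,a). a(r:=i)) (SIGMA i:{..m}. FI r (m-i))"
proof (rule inj_onI, clarsimp)
  fix i a i' a' assume "a \<in> FI r (m-i)" "a' \<in> FI r (m-i')" and e: "a(r:=i) = a'(r:=i')"
  then have "a r = 0" "a' r = 0" by (auto simp: FI_def multi_indices_def)
  moreover have "i = i'" using fun_cong[OF e, of r] by simp
  moreover have "a j = a' j" if "j \<noteq> r" for j using fun_cong[OF e, of j] that by simp
  ultimately show "i = i' \<and> a = a'" by (metis ext)
qed

lemma FI_finite: "finite (FI r m)"
proof (induction r arbitrary: m)
  case 0 then show ?case by (simp add: FI_0)
next
  case (Suc r) then show ?case by (simp add: FI_Suc)
qed

lemma multinomial:
  fixes w :: "nat \<Rightarrow> 'a::field_char_0"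
  shows "(\<Sum>j<r. w j) ^ m = (\<Sum>a\<in>FI r m. of_nat (fact m) / of_nat (\<Prod>j<r. fact (a j)) * (\<Prod>j<r. w j ^ a j))"
proof (induction r arbitrary: m)
  case 0 then show ?case by (simp add: FI_0)
next
  case (Suc r)
  let ?g = "\<lambda>r m a. of_nat (fact m) / of_nat (\<Prod>j<r. fact (a j)) * (\<Prod>j<r. w j ^ a j) :: 'a"
  have "(\<Sum>j<Suc r. w j) ^ m = (w r + (\<Sum>j<r. w j)) ^ m" by (simp add: add.commute)
  also have "\<dots> = (\<Sum>i\<le>m. of_nat (m choose i) * w r ^ i * (\<Sum>j<r. w j) ^ (m - i))"
    by (rule binomial_ring)
  also have "\<dots> = (\<Sum>i\<le>m. \<Sum>a\<in>FI r (m-i). ?g (Suc r) m (a(r:=i)))"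
  proof (intro sum.cong refl)
    fix i assume i: "i \<in> {..m}"
    have "of_nat (m choose i) * w r ^ i * (\<Sum>j<r. w j) ^ (m - i)
        = (\<Sum>a\<in>FI r (m-i). of_nat (m choose i) * w r ^ i * ?g r (m-i) a)"
      by (simp add: Suc.IH sum_distrib_left)
    also have "\<dots> = (\<Sum>a\<in>FI r (m-i). ?g (Suc r) m (a(r:=i)))"
    proof (intro sum.cong refl)
      fix a assume a: "a \<in> FI r (m-i)"
      have p1: "(\<Prod>j<Suc r. fact ((a(r:=i)) j)) = (\<Prod>j<r. fact (a j)) * fact i"
        unfolding prod.lessThan_Suc by (auto intro!: prod.cong)
      have p2: "(\<Prod>j<Suc r. w j ^ (a(r:=i)) j) = (\<Prod>j<r. w j ^ a j) * w r ^ i"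
        unfolding prod.lessThan_Suc by (auto intro!: prod.cong)
      have c: "(of_nat (m choose i) :: 'a) = of_nat (fact m) / (of_nat (fact i) * of_nat (fact (m - i)))"
        using i by (simp add: binomial_fact)
      have nz: "(of_nat (\<Prod>j<r. fact (a j)) :: 'a) \<noteq> 0" by (simp add: prod_pos)
      show "of_nat (m choose i) * w r ^ i * ?g r (m-i) a = ?g (Suc r) m (a(r:=i))"
        unfolding p1 p2 c using nz by (simp add: field_simps)
    qed
    finally show "of_nat (m choose i) * w r ^ i * (\<Sum>j<r. w j) ^ (m - i)
        = (\<Sum>a\<in>FI r (m-i). ?g (Suc r) m (a(r:=i)))" .
  qed
  also have "\<dots> = (\<Sum>(i,a)\<in>(SIGMA i:{..m}. FI r (m-i)). ?g (Suc r) m (a(r:=i)))"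
    by (rule sum.Sigma) (auto simp: FI_finite)
  also have "\<dots> = (\<Sum>b\<in>FI (Suc r) m. ?g (Suc r) m b)"
    unfolding FI_Suc by (subst sum.reindex[OF FI_inj]) (simp add: case_prod_unfold)
  finally show ?case .
qed

lemma has_sum_finite_sum:
  fixes f :: "'i \<Rightarrow> 'a \<Rightarrow> 'b::{topological_comm_monoid_add}"
  assumes "finite I" "\<And>i. i \<in> I \<Longrightarrow> (f i has_sum s i) A"
  shows "((\<lambda>x. \<Sum>i\<in>I. f i x) has_sum (\<Sum>i\<in>I. s i)) A"
  using assms
proof (induction I rule: finite_induct)
  case empty then show ?case by simp
next
  case (insert i I)
  then show ?case by (simp add: has_sum_add)
qed

lemma geom_has_sum:
  fixes s :: "'a::{real_normed_field,banach}"
  assumes "norm s < 1"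
  shows "((\<lambda>m. s ^ m) has_sum 1 / (1 - s)) UNIV"
proof (rule norm_summable_imp_has_sum)
  show "summable (\<lambda>m. norm (s ^ m))" using assms by (simp add: norm_power summable_geometric)
  show "(\<lambda>m. s ^ m) sums (1 / (1 - s))" using geometric_sums[OF assms] by simp
qed

lemma multi_geom:
  fixes w :: "nat \<Rightarrow> complex"
  assumes w: "(\<Sum>j<r. norm (w j)) < 1"
  shows "((\<lambda>a. of_nat (fact (\<Sum>j<r. a j)) / of_nat (\<Prod>j<r. fact (a j)) * (\<Prod>j<r. w j ^ a j))
           has_sum 1 / (1 - (\<Sum>j<r. w j))) (multi_indices r)"
proof -
  define h where "h = (\<lambda>(m::nat, a::nat\<Rightarrow>nat). of_nat (fact m) / of_nat (\<Prod>j<r. fact (a j)) * (\<Prod>j<r. w j ^ a j) :: complex)"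
  define hr where "hr = (\<lambda>(m::nat, a::nat\<Rightarrow>nat). of_nat (fact m) / of_nat (\<Prod>j<r. fact (a j)) * (\<Prod>j<r. norm (w j) ^ a j) :: real)"
  define S where "S = (SIGMA m:UNIV. FI r m)"
  have sn: "norm (\<Sum>j<r. w j) < 1" using norm_sum[of w "{..<r}"] w by linarith
  have fib: "((\<lambda>a. h (m, a)) has_sum (\<Sum>j<r. w j) ^ m) (FI r m)" for m
    by (rule has_sum_finiteI[OF FI_finite]) (simp add: h_def multinomial)
  have fibr: "((\<lambda>a. hr (m, a)) has_sum (\<Sum>j<r. norm (w j)) ^ m) (FI r m)" for m
    by (rule has_sum_finiteI[OF FI_finite]) (simp add: hr_def multinomial)
  have gr: "(\<lambda>m. (\<Sum>j<r. norm (w j)) ^ m) summable_on UNIV"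
    using geom_has_sum[of "\<Sum>j<r. norm (w j)"] w sum_nonneg[of "{..<r}" "\<lambda>j. norm (w j)"]
    by (auto simp: summable_on_def)
  have "hr summable_on S" unfolding S_def
    by (rule summable_on_SigmaI[OF fibr gr]) (auto simp: hr_def intro!: divide_nonneg_nonneg mult_nonneg_nonneg prod_nonneg)
  moreover have "norm (h x) = hr x" for x
    by (auto simp: h_def hr_def norm_mult norm_divide prod_norm[symmetric] norm_power case_prod_unfold)
  ultimately have "(\<lambda>x. norm (h x)) summable_on S" by simp
  then have "h summable_on S" by (rule abs_summable_summable)
  then have "(h has_sum 1 / (1 - (\<Sum>j<r. w j))) S" unfolding S_def
    by (rule has_sum_SigmaI[OF fib geom_has_sum[OF sn]])
  then show ?thesis
  proof (subst (asm) has_sum_reindex_bij_witness[where i = "\<lambda>a. (\<Sum>j<r. a j, a)" and j = snd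
         and T = "multi_indices r" and h = "\<lambda>a. of_nat (fact (\<Sum>j<r. a j)) / of_nat (\<Prod>j<r. fact (a j)) * (\<Prod>j<r. w j ^ a j)"
         and s' = "1 / (1 - (\<Sum>j<r. w j))"])
  qed (auto simp: S_def FI_def h_def)
qed

lemma root_pow_sum:
  assumes u: "u \<noteq> 0" and n: "n > 0" and m: "m < n"
  shows "(\<Sum>\<zeta>\<in>{\<zeta>::complex. \<zeta> ^ n = u}. \<zeta> ^ m) = (if m = 0 then of_nat n else 0)"
proof (cases "m = 0")
  case True then show ?thesis using card_nth_roots[OF u n] by simp
next
  case False
  define \<omega> where "\<omega> = cis (2 * pi / real n)"
  have \<omega>n: "\<omega> ^ n = 1" using n by (simp add: \<omega>_def Complex.DeMoivre)
  have \<omega>0: "\<omega> \<noteq> 0" by (simp add: \<omega>_def)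
  have \<omega>m: "\<omega> ^ m \<noteq> 1"
  proof
    assume "\<omega> ^ m = 1"
    then have "cis (real m * (2 * pi / real n)) = 1" by (simp add: \<omega>_def Complex.DeMoivre)
    then have "cos (real m * (2 * pi / real n)) = 1" by (simp add: complex_eq_iff)
    then obtain k :: int where k: "real m * (2 * pi / real n) = of_int k * 2 * pi"
      by (auto simp: cos_one_2pi_int)
    then have "real m = of_int k * real n" using n by (simp add: field_simps)
    then have km: "int m = k * int n" by (metis of_int_eq_iff of_int_mult of_int_of_nat_eq)
    show False
    proof (cases "k \<le> 0")
      case True
      then have "k * int n \<le> 0" by (simp add: mult_nonpos_nonneg)
      then show False using km False by simp
    next
      case False
      then have "k * int n \<ge> 1 * int n" by (intro mult_right_mono) auto
      moreover have "int m < int n" using m by simp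
      ultimately show False using km by linarith
    qed
  qed
  define R where "R = {\<zeta>::complex. \<zeta> ^ n = u}"
  have "(\<Sum>\<zeta>\<in>R. \<zeta> ^ m) = (\<Sum>\<zeta>\<in>R. (\<omega> * \<zeta>) ^ m)"
    by (rule sum.reindex_bij_witness[where j = "\<lambda>\<zeta>. \<zeta> / \<omega>" and i = "\<lambda>\<zeta>. \<omega> * \<zeta>"])
       (auto simp: R_def \<omega>0 power_mult_distrib \<omega>n power_divide)
  also have "\<dots> = \<omega> ^ m * (\<Sum>\<zeta>\<in>R. \<zeta> ^ m)" by (simp add: power_mult_distrib sum_distrib_left)
  finally have "(1 - \<omega> ^ m) * (\<Sum>\<zeta>\<in>R. \<zeta> ^ m) = 0" by (simp add: algebra_simps)
  then show ?thesis using \<omega>m False by (simp add: R_def)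
qed

lemma root_powi_sum:
  assumes u: "u \<noteq> 0" and n: "n > 0"
  shows "(\<Sum>\<zeta>\<in>{\<zeta>::complex. \<zeta> ^ n = u}. \<zeta> powi e) =
         (if int n dvd e then of_nat n * u powi (e div int n) else 0)"
proof -
  define q where "q = e div int n"
  define m where "m = nat (e mod int n)"
  have em: "e = int n * q + int m" using n by (simp add: q_def m_def)
  have mlt: "m < n" using n by (simp add: m_def nat_less_iff)
  have "(\<Sum>\<zeta>\<in>{\<zeta>::complex. \<zeta> ^ n = u}. \<zeta> powi e) = (\<Sum>\<zeta>\<in>{\<zeta>::complex. \<zeta> ^ n = u}. u powi q * \<zeta> ^ m)"
  proof (intro sum.cong refl)
    fix \<zeta> assume "\<zeta> \<in> {\<zeta>::complex. \<zeta> ^ n = u}"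
    then have z: "\<zeta> ^ n = u" "\<zeta> \<noteq> 0" using u n by auto
    have "\<zeta> powi e = \<zeta> powi (int n * q) * \<zeta> powi (int m)" unfolding em
      using z by (simp add: power_int_add)
    also have "\<dots> = u powi q * \<zeta> ^ m" by (simp add: power_int_mult z(1))
    finally show "\<zeta> powi e = u powi q * \<zeta> ^ m" .
  qed
  also have "\<dots> = u powi q * (if m = 0 then of_nat n else 0)"
    by (simp add: sum_distrib_left[symmetric] root_pow_sum[OF u n mlt])
  also have "(m = 0) = (int n dvd e)"
  proof -
    have "e mod int n \<ge> 0" using n by simp
    then show ?thesis by (auto simp: m_def dvd_eq_mod_eq_0)
  qed
  finally show ?thesis by (simp add: q_def mult.commute)
qed

lemma root_tuples_Suc:
  "root_tuples (Suc r) n u = (\<lambda>(z,\<zeta>). z(r:=\<zeta>)) ` (root_tuples r n u \<times> {\<zeta>. \<zeta> ^ n r = u r})"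
proof (intro equalityI subsetI)
  fix y assume y: "y \<in> root_tuples (Suc r) n u"
  have "y = (y(r:=0))(r := y r)" by simp
  moreover have "(y(r:=0), y r) \<in> root_tuples r n u \<times> {\<zeta>. \<zeta> ^ n r = u r}"
    using y by (auto simp: root_tuples_def)
  ultimately show "y \<in> (\<lambda>(z,\<zeta>). z(r:=\<zeta>)) ` (root_tuples r n u \<times> {\<zeta>. \<zeta> ^ n r = u r})"
    by (metis (no_types, lifting) case_prod_conv image_eqI)
qed (auto simp: root_tuples_def less_Suc_eq)

lemma root_tuples_inj: "inj_on (\<lambda>(z,\<zeta>). z(r:=\<zeta>)) (root_tuples r n u \<times> {\<zeta>. \<zeta> ^ n r = u r})"
proof (rule inj_onI, clarsimp)
  fix z \<zeta> z' \<zeta>' assume "z \<in> root_tuples r n u" "z' \<in> root_tuples r n u" and e: "z(r:=\<zeta>) = z'(r:=\<zeta>')"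
  then have "z r = 0" "z' r = 0" by (auto simp: root_tuples_def)
  moreover have "\<zeta> = \<zeta>'" using fun_cong[OF e, of r] by simp
  moreover have "z j = z' j" if "j \<noteq> r" for j using fun_cong[OF e, of j] that by simp
  ultimately show "z = z' \<and> \<zeta> = \<zeta>'" by (metis ext)
qed

lemma sum_prod_roots:
  fixes g :: "nat \<Rightarrow> complex \<Rightarrow> complex"
  assumes "\<forall>j<r. n j > 0"
  shows "finite (root_tuples r n u) \<and>
    (\<Sum>z\<in>root_tuples r n u. \<Prod>j<r. g j (z j)) = (\<Prod>j<r. \<Sum>\<zeta>\<in>{\<zeta>. \<zeta> ^ n j = u j}. g j \<zeta>)"
  using assms
proof (induction r)
  case 0
  have "root_tuples 0 n u = {\<lambda>_. 0}" by (auto simp: root_tuples_def)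
  then show ?case by simp
next
  case (Suc r)
  then have IH: "finite (root_tuples r n u)"
    "(\<Sum>z\<in>root_tuples r n u. \<Prod>j<r. g j (z j)) = (\<Prod>j<r. \<Sum>\<zeta>\<in>{\<zeta>. \<zeta> ^ n j = u j}. g j \<zeta>)" by auto
  have fin: "finite {\<zeta>::complex. \<zeta> ^ n r = u r}" using Suc.prems by auto
  have "(\<Sum>z\<in>root_tuples (Suc r) n u. \<Prod>j<Suc r. g j (z j))
      = (\<Sum>(z,\<zeta>)\<in>root_tuples r n u \<times> {\<zeta>. \<zeta> ^ n r = u r}. \<Prod>j<Suc r. g j ((z(r:=\<zeta>)) j))"
    unfolding root_tuples_Suc by (subst sum.reindex[OF root_tuples_inj]) (simp add: case_prod_unfold)
  also have "\<dots> = (\<Sum>(z,\<zeta>)\<in>root_tuples r n u \<times> {\<zeta>. \<zeta> ^ n r = u r}. (\<Prod>j<r. g j (z j)) * g r \<zeta>)"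
    unfolding prod.lessThan_Suc by (intro sum.cong refl) (auto intro!: prod.cong)
  also have "\<dots> = (\<Sum>z\<in>root_tuples r n u. \<Prod>j<r. g j (z j)) * (\<Sum>\<zeta>\<in>{\<zeta>. \<zeta> ^ n r = u r}. g r \<zeta>)"
    by (simp add: sum_product sum.cartesian_product)
  finally show ?case using IH fin by (simp add: root_tuples_Suc)
qed



theorem mainTheorem12:
  fixes r :: nat and d k :: "nat \<Rightarrow> nat"
  assumes d_pos: "\<forall>j<r. 1 \<le> d j"
    and k_sum: "(\<Sum>j<r. k j) = (\<Sum>j<r. d j)"
  shows "\<exists>\<epsilon>>0. \<forall>u :: nat \<Rightarrow> complex.
           (\<forall>j<r. u j \<noteq> 0 \<and> norm (u j) < \<epsilon>) \<longrightarrow>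
           ((\<lambda>b. (\<Prod>j<r. of_nat (d j + 1)) *
                  (of_nat (fact (\<Sum>j<r. (d j + 1) * b j)) *
                   (\<Prod>j<r. inv_fact (int ((d j + 1) * b j) + int (d j) - int (k j)))) *
                  (\<Prod>j<r. u j ^ b j))
            has_sum trace_T r d k u) (multi_indices r)"
proof -
  define N where "N = (\<Sum>j<r. d j + 1)"
  define c :: real where "c = 1 / (real r + 1)"
  have c0: "0 < c" "c \<le> 1" by (auto simp: c_def)
  have rc: "real r * c < 1" by (simp add: c_def field_simps)
  have Nge: "d j + 1 \<le> N" if "j < r" for j
    unfolding N_def using that by (intro member_le_sum) auto
  show ?thesis
  proof (intro exI[of _ "c ^ N"] conjI allI impI)
    show "0 < c ^ N" using c0 by simp
    fix u :: "nat \<Rightarrow> complex"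
    assume u: "\<forall>j<r. u j \<noteq> 0 \<and> norm (u j) < c ^ N"
    define R where "R = root_tuples r (\<lambda>j. d j + 1) u"
    define M where "M = (\<lambda>a::nat\<Rightarrow>nat. of_nat (fact (\<Sum>j<r. a j)) / of_nat (\<Prod>j<r. fact (a j)) :: complex)"
    define e where "e = (\<lambda>(a::nat\<Rightarrow>nat) j. int (a j) + int (k j) - int (d j))"
    define P where "P = (\<lambda>z::nat\<Rightarrow>complex. \<Prod>j<r. z j powi (int (d j) - int (k j)))"
    have SP: "finite R \<and> (\<Sum>z\<in>R. \<Prod>j<r. g j (z j)) = (\<Prod>j<r. \<Sum>\<zeta>\<in>{\<zeta>. \<zeta> ^ (d j + 1) = u j}. g j \<zeta>)" for g :: "nat \<Rightarrow> complex \<Rightarrow> complex"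
      unfolding R_def using sum_prod_roots[of r "\<lambda>j. d j + 1" u g] by simp
    have finR: "finite R" using SP by blast
    have zR: "z j \<noteq> 0 \<and> norm (z j) < c" if "z \<in> R" "j < r" for z j
    proof
      have zj: "z j ^ (d j + 1) = u j" using that by (auto simp: R_def root_tuples_def)
      then show "z j \<noteq> 0" using u that by auto
      have "norm (z j) ^ (d j + 1) = norm (u j)" using zj by (metis norm_power)
      also have "\<dots> < c ^ N" using u that by auto
      also have "\<dots> \<le> c ^ (d j + 1)" using c0 Nge[OF that(2)] by (intro power_decreasing) auto
      finally have "norm (z j) ^ (d j + 1) < c ^ (d j + 1)" .
      then show "norm (z j) < c" using c0 power_less_imp_less_base by fastforce
    qed
    have zsum: "(\<Sum>j<r. norm (z j)) < 1" if "z \<in> R" for z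
    proof (cases "r = 0")
      case True then show ?thesis by simp
    next
      case False
      then have "(\<Sum>j<r. norm (z j)) < (\<Sum>j<r. c)"
        using zR[OF that] by (intro sum_strict_mono) auto
      then show ?thesis using rc by simp
    qed
    have each: "((\<lambda>a. M a * (\<Prod>j<r. z j powi e a j)) has_sum (1 / (P z * (1 - (\<Sum>j<r. z j))))) (multi_indices r)"
      if z: "z \<in> R" for z
    proof -
      have "((\<lambda>a. (1 / P z) * (M a * (\<Prod>j<r. z j ^ a j))) has_sum (1 / P z) * (1 / (1 - (\<Sum>j<r. z j))))
              (multi_indices r)"
        by (rule has_sum_cmult_right) (unfold M_def, rule multi_geom[OF zsum[OF z]])
      moreover have "(1 / P z) * (M a * (\<Prod>j<r. z j ^ a j)) = M a * (\<Prod>j<r. z j powi e a j)" for a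
      proof -
        have "(1 / P z) * (\<Prod>j<r. z j ^ a j) = (\<Prod>j<r. z j powi e a j)"
        proof -
          have "(\<Prod>j<r. z j powi e a j) = (\<Prod>j<r. z j ^ a j * inverse (z j powi (int (d j) - int (k j))))"
          proof (intro prod.cong refl)
            fix j assume j: "j \<in> {..<r}"
            have ee: "e a j = int (a j) + - (int (d j) - int (k j))" by (simp add: e_def)
            have zj: "z j \<noteq> 0" using zR[OF z] j by auto
            show "z j powi e a j = z j ^ a j * inverse (z j powi (int (d j) - int (k j)))"
              unfolding ee power_int_add[OF disjI1[OF zj]] power_int_minus by simp
          qed
          also have "\<dots> = (\<Prod>j<r. z j ^ a j) * inverse (P z)"
            by (simp add: prod.distrib P_def prod_inversef[symmetric] o_def)
          finally show ?thesis by (simp add: field_simps)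
        qed
        then show ?thesis by (simp add: algebra_simps)
      qed
      ultimately show ?thesis by simp
    qed
    define F where "F = (\<lambda>a. M a * (\<Prod>j<r. if int (d j + 1) dvd e a j then of_nat (d j + 1) * u j powi (e a j div int (d j + 1)) else 0))"
    have trace_eq: "trace_T r d k u = (\<Sum>z\<in>R. 1 / (P z * (1 - (\<Sum>j<r. z j))))"
      by (simp add: trace_T_def R_def P_def)
    have Fsum: "(F has_sum trace_T r d k u) (multi_indices r)"
    proof -
      have "((\<lambda>a. \<Sum>z\<in>R. M a * (\<Prod>j<r. z j powi e a j)) has_sum trace_T r d k u) (multi_indices r)"
        unfolding trace_eq by (rule has_sum_finite_sum[OF finR each])
      moreover have "(\<Sum>z\<in>R. M a * (\<Prod>j<r. z j powi e a j)) = F a" for a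
      proof -
        have "(\<Sum>z\<in>R. M a * (\<Prod>j<r. z j powi e a j)) = M a * (\<Sum>z\<in>R. \<Prod>j<r. z j powi e a j)"
          by (simp add: sum_distrib_left)
        also have "(\<Sum>z\<in>R. \<Prod>j<r. z j powi e a j) = (\<Prod>j<r. \<Sum>\<zeta>\<in>{\<zeta>. \<zeta> ^ (d j + 1) = u j}. \<zeta> powi e a j)"
          using SP[of "\<lambda>j \<zeta>. \<zeta> powi e a j"] by blast
        also have "\<dots> = (\<Prod>j<r. if int (d j + 1) dvd e a j then of_nat (d j + 1) * u j powi (e a j div int (d j + 1)) else 0)"
          by (intro prod.cong refl, subst root_powi_sum) (use u in auto)
        finally show ?thesis by (simp add: F_def)
      qed
      ultimately show ?thesis by simp
    qed
    show "((\<lambda>b. (\<Prod>j<r. of_nat (d j + 1)) *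
                  (of_nat (fact (\<Sum>j<r. (d j + 1) * b j)) *
                   (\<Prod>j<r. inv_fact (int ((d j + 1) * b j) + int (d j) - int (k j)))) *
                  (\<Prod>j<r. u j ^ b j))
            has_sum trace_T r d k u) (multi_indices r)" (is "(?G has_sum _) _")
    proof -
      define T where "T = trace_T r d k u"
      define alpha where "alpha = (\<lambda>(b::nat\<Rightarrow>nat) j. if j < r then nat (int ((d j + 1) * b j) + int (d j) - int (k j)) else 0)"
      define beta where "beta = (\<lambda>(a::nat\<Rightarrow>nat) j. if j < r then nat (e a j div int (d j + 1)) else 0)"
      define B where "B = {b \<in> multi_indices r. \<forall>j<r. 0 \<le> int ((d j + 1) * b j) + int (d j) - int (k j)}"
      have BM: "B \<subseteq> multi_indices r" by (auto simp: B_def)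
      have G0: "?G b = 0" if "b \<in> multi_indices r - B" for b
      proof -
        from that obtain j where j: "j < r" "int ((d j + 1) * b j) + int (d j) - int (k j) < 0"
          by (auto simp: B_def not_le)
        then have "(\<Prod>j<r. inv_fact (int ((d j + 1) * b j) + int (d j) - int (k j))) = 0"
          by (subst prod_zero_iff) (auto simp: inv_fact_def intro!: bexI[of _ j])
        then show ?thesis by simp
      qed
      have inj: "inj_on alpha B"
      proof (rule inj_onI)
        fix b b' assume b: "b \<in> B" "b' \<in> B" and eq: "alpha b = alpha b'"
        show "b = b'"
        proof
          fix j show "b j = b' j"
          proof (cases "j < r")
            case True
            then have "nat (int ((d j + 1) * b j) + int (d j) - int (k j)) = nat (int ((d j + 1) * b' j) + int (d j) - int (k j))"
              using fun_cong[OF eq, of j] by (simp add: alpha_def)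
            moreover have "0 \<le> int ((d j + 1) * b j) + int (d j) - int (k j)"
              "0 \<le> int ((d j + 1) * b' j) + int (d j) - int (k j)"
              using b True unfolding B_def by blast+
            ultimately have "int ((d j + 1) * b j) + int (d j) - int (k j) = int ((d j + 1) * b' j) + int (d j) - int (k j)"
              by (metis nat_eq_iff2)
            then have "int ((d j + 1) * b j) = int ((d j + 1) * b' j)" by linarith
            then have "(d j + 1) * b j = (d j + 1) * b' j" by (simp only: of_nat_eq_iff)
            then show ?thesis using mult_left_cancel[of "d j + 1" "b j" "b' j"] by simp
          next
            case False then show ?thesis using b by (auto simp: B_def multi_indices_def)
          qed
        qed
      qed
      have alphaM: "alpha ` B \<subseteq> multi_indices r" by (auto simp: alpha_def multi_indices_def)
      have F0: "F a = 0" if "a \<in> multi_indices r - alpha ` B" for a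
      proof (rule ccontr)
        assume "F a \<noteq> 0"
        then have dv: "int (d j + 1) dvd e a j" if "j < r" for j
          using that by (auto simp: F_def prod_zero_iff split: if_splits)
        have "beta a \<in> B \<and> alpha (beta a) = a"
        proof -
          have key: "int ((d j + 1) * beta a j) = e a j" if j: "j < r" for j
          proof -
            obtain q where q: "e a j = int (d j + 1) * q" using dv[OF j] by (auto elim: dvdE)
            have "e a j \<ge> - int (d j)" by (simp add: e_def)
            then have "q \<ge> 0"
            proof (rule contrapos_pp)
              assume "\<not> q \<ge> 0"
              then have "q \<le> -1" by simp
              then have "int (d j + 1) * q \<le> int (d j + 1) * (-1)" by (intro mult_left_mono) auto
              then show "\<not> e a j \<ge> - int (d j)" unfolding q by simp
            qed
            moreover have "e a j div int (d j + 1) = q" unfolding q by simp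
            ultimately show ?thesis using j q by (simp add: beta_def algebra_simps)
          qed
          show ?thesis
          proof
            show "beta a \<in> B" using key that
              by (auto simp: B_def multi_indices_def beta_def e_def)
            show "alpha (beta a) = a"
            proof
              fix j show "alpha (beta a) j = a j"
                using key[of j] that by (cases "j < r") (auto simp: alpha_def e_def multi_indices_def)
            qed
          qed
        qed
        then show False using that by (metis Diff_iff image_eqI)
      qed
      have FG: "F (alpha b) = ?G b" if b: "b \<in> B" for b
      proof -
        define a where "a = alpha b"
        have aj: "int (a j) = int ((d j + 1) * b j) + int (d j) - int (k j)" if "j < r" for j
          using b that by (auto simp: a_def alpha_def B_def)
        have ea: "e a j = int (d j + 1) * int (b j)" if "j < r" for j
          using aj[OF that] by (simp add: e_def algebra_simps)
        have "int (\<Sum>j<r. a j) = (\<Sum>j<r. int ((d j + 1) * b j)) + (\<Sum>j<r. int (d j)) - (\<Sum>j<r. int (k j))"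
          by (simp add: aj sum.distrib sum_subtractf)
        also have "(\<Sum>j<r. int (d j)) = (\<Sum>j<r. int (k j))" using k_sum by (metis of_nat_sum)
        finally have "int (\<Sum>j<r. a j) = int (\<Sum>j<r. (d j + 1) * b j)" unfolding of_nat_sum by simp
        then have sa: "(\<Sum>j<r. a j) = (\<Sum>j<r. (d j + 1) * b j)" by (simp only: of_nat_eq_iff)
        have p1: "(\<Prod>j<r. if int (d j + 1) dvd e a j then of_nat (d j + 1) * u j powi (e a j div int (d j + 1)) else 0)
                  = (\<Prod>j<r. (of_nat (d j + 1) :: complex)) * (\<Prod>j<r. u j ^ b j)"
          by (simp add: prod.distrib[symmetric] ea del: of_nat_Suc)
        have p2: "(\<Prod>j<r. inv_fact (int ((d j + 1) * b j) + int (d j) - int (k j))) = 1 / of_nat (\<Prod>j<r. fact (a j))"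
        proof -
          have "(\<Prod>j<r. inv_fact (int ((d j + 1) * b j) + int (d j) - int (k j))) = (\<Prod>j<r. 1 / (of_nat (fact (a j)) :: complex))"
            by (intro prod.cong refl, subst aj[symmetric]) (auto simp: inv_fact_def)
          then show ?thesis by (simp add: prod_dividef)
        qed
        show ?thesis unfolding a_def[symmetric] F_def M_def p1 p2 sa by simp
      qed
      have "(F has_sum T) (alpha ` B)"
        using Fsum unfolding T_def
        by (subst (asm) has_sum_cong_neutral[where T = "alpha ` B" and g = F]) (use F0 alphaM in auto)
      then have "((F \<circ> alpha) has_sum T) B" by (simp add: has_sum_reindex[OF inj])
      then have "(?G has_sum T) B" by (rule has_sum_cong[THEN iffD1, rotated]) (simp add: FG)
      then show ?thesis unfolding T_def
        by (subst has_sum_cong_neutral[where T = B and g = ?G]) (use G0 BM in auto)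
    qed
  qed
qed

end
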